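(* Let $t\ge1$, $k\ge t+1$, $v\ge 2$. If an OA$(t+1,k+1,v)$ exists, then a simple COA$_\lambda(t,k+t-1,v)$ exists for every positive integer $\lambda\le v$.
   Context: An OA$_\lambda(t,k,v)$ is a $\lambda v^t\times k$ array over a $v$-set $V$ such that every $t$ columns contain every $t$-tuple exactly $\lambda$ times; OA$(t,k,v)$ means $\lambda=1$. A COA$_\lambda(t,k,v)$ is a $\lambda v^t\times k$ array over $V$ in which every set of $t$ consecutive columns contains every $t$-tuple exactly $\lambda$ times. It is simple if for any two distinct sets of $t$ consecutive columns sharing exactly $i$ columns ($0\le i\le t-1$), the subarray on the $2t-i$ columns of their union contains each $(2t-i)$-tuple at most once. *)

theory Defs
  imports Main "HOL-Library.FuncSet"
begin

definition array_on :: "'a set \<Rightarrow> nat \<Rightarrow> nat \<Rightarrow> 'a list list \<Rightarrow> bool" where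
  "array_on V N k A \<longleftrightarrow> length A = N \<and> (\<forall>r\<in>set A. length r = k \<and> set r \<subseteq> V)"

definition tuple_count :: "'a list list \<Rightarrow> nat set \<Rightarrow> (nat \<Rightarrow> 'a) \<Rightarrow> nat" where
  "tuple_count A C f = length (filter (\<lambda>r. \<forall>c\<in>C. r ! c = f c) A)"

definition is_OA :: "nat \<Rightarrow> nat \<Rightarrow> nat \<Rightarrow> 'a set \<Rightarrow> 'a list list \<Rightarrow> bool" where
  "is_OA lam t k V A \<longleftrightarrow> finite V \<and> array_on V (lam * card V ^ t) k A \<and>
     (\<forall>C. C \<subseteq> {..<k} \<and> card C = t \<longrightarrow> (\<forall>f \<in> C \<rightarrow>\<^sub>E V. tuple_count A C f = lam))"

definition window :: "nat \<Rightarrow> nat \<Rightarrow> nat set" where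
  "window t i = {i..<i+t}"

definition is_COA :: "nat \<Rightarrow> nat \<Rightarrow> nat \<Rightarrow> 'a set \<Rightarrow> 'a list list \<Rightarrow> bool" where
  "is_COA lam t k V A \<longleftrightarrow> finite V \<and> array_on V (lam * card V ^ t) k A \<and>
     (\<forall>i. i + t \<le> k \<longrightarrow> (\<forall>f \<in> window t i \<rightarrow>\<^sub>E V. tuple_count A (window t i) f = lam))"

definition is_simple_COA :: "nat \<Rightarrow> nat \<Rightarrow> nat \<Rightarrow> 'a set \<Rightarrow> 'a list list \<Rightarrow> bool" where
  "is_simple_COA lam t k V A \<longleftrightarrow> is_COA lam t k V A \<and>
     (\<forall>i j. i + t \<le> k \<and> j + t \<le> k \<and> window t i \<noteq> window t j \<and>
            card (window t i \<inter> window t j) \<le> t - 1 \<longrightarrow>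
        (\<forall>f \<in> (window t i \<union> window t j) \<rightarrow>\<^sub>E V.
            tuple_count A (window t i \<union> window t j) f \<le> 1))"

end

theory Submission imports Defs begin

lemma len_filter_disj:
  assumes "\<And>x. \<not> (P x \<and> R x)"
  shows "length (filter (\<lambda>x. P x \<or> R x) xs) = length (filter P xs) + length (filter R xs)"
  using assms by (induction xs) auto

lemma split_sum:
  fixes xs :: "nat list list" and n :: nat
  shows "length (filter (\<lambda>r. r!k < n \<and> Q r) xs) = (\<Sum>s<n. length (filter (\<lambda>r. r!k = s \<and> Q r) xs))"
proof (induction n)
  case 0 then show ?case by simp
next
  case (Suc n)
  have "filter (\<lambda>r. r!k < Suc n \<and> Q r) xs = filter (\<lambda>r. (r!k < n \<and> Q r) \<or> (r!k = n \<and> Q r)) xs"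
    by (rule filter_cong) auto
  then have "length (filter (\<lambda>r. r!k < Suc n \<and> Q r) xs) =
     length (filter (\<lambda>r. r!k < n \<and> Q r) xs) + length (filter (\<lambda>r. r!k = n \<and> Q r) xs)"
    using len_filter_disj[of "\<lambda>r. r!k < n \<and> Q r" "\<lambda>r. r!k = n \<and> Q r" xs] by auto
  then show ?case using Suc by simp
qed

lemma part_count:
  assumes "finite D" "finite V" "\<forall>r\<in>set xs. set r \<subseteq> V \<and> (\<forall>c\<in>D. c < length r)"
  shows "length xs = (\<Sum>f\<in>D \<rightarrow>\<^sub>E V. tuple_count xs D f)"
  using assms(3)
proof (induction xs)
  case Nil then show ?case by (simp add: tuple_count_def)
next
  case (Cons r xs)
  let ?g = "restrict (\<lambda>c. r!c) D"
  have g: "?g \<in> D \<rightarrow>\<^sub>E V" using Cons.prems by auto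
  have "(\<Sum>f\<in>D \<rightarrow>\<^sub>E V. (if (\<forall>c\<in>D. r!c = f c) then 1 else 0::nat)) =
        (\<Sum>f\<in>D \<rightarrow>\<^sub>E V. (if f = ?g then 1 else 0))"
  proof (rule sum.cong)
    fix f assume f: "f \<in> D \<rightarrow>\<^sub>E V"
    have "(\<forall>c\<in>D. r!c = f c) \<longleftrightarrow> f = ?g"
      using f by (auto simp: PiE_def extensional_def fun_eq_iff)
    then show "(if (\<forall>c\<in>D. r!c = f c) then 1 else 0::nat) = (if f = ?g then 1 else 0)" by simp
  qed simp
  also have "\<dots> = 1" using g by (simp only: sum.delta[OF finite_PiE[OF assms(1,2)]]) simp
  finally have 1: "(\<Sum>f\<in>D \<rightarrow>\<^sub>E V. (if (\<forall>c\<in>D. r!c = f c) then 1 else 0::nat)) = 1" .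
  have "(\<Sum>f\<in>D \<rightarrow>\<^sub>E V. tuple_count (r#xs) D f) =
     (\<Sum>f\<in>D \<rightarrow>\<^sub>E V. (if (\<forall>c\<in>D. r!c = f c) then 1 else 0::nat)) + (\<Sum>f\<in>D \<rightarrow>\<^sub>E V. tuple_count xs D f)"
    by (auto simp: tuple_count_def sum.distrib[symmetric] intro!: sum.cong)
  then show ?case using 1 Cons by simp
qed

lemma le1:
  assumes "\<forall>g\<in>T \<rightarrow>\<^sub>E V. length (filter (\<lambda>r. \<forall>x\<in>T. r!x = g x) xs) = 1"
    "\<forall>r\<in>set xs. \<forall>x\<in>T. r!x \<in> V"
    "\<And>r1 r2. Q r1 \<Longrightarrow> Q r2 \<Longrightarrow> (\<forall>x\<in>T. r1!x = r2!x)"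
  shows "length (filter Q xs) \<le> 1"
proof (cases "filter Q xs = []")
  case True then show ?thesis by simp
next
  case False
  then obtain r0 where r0: "r0 \<in> set xs" "Q r0"
    by (metis filter_empty_conv)
  let ?g = "restrict (\<lambda>x. r0!x) T"
  have g: "?g \<in> T \<rightarrow>\<^sub>E V" using assms(2) r0 by auto
  have "filter Q xs = filter Q (filter (\<lambda>r. \<forall>x\<in>T. r!x = ?g x) xs)"
    using assms(3)[OF _ r0(2)] by (auto intro!: filter_cong)
  then have "length (filter Q xs) \<le> length (filter (\<lambda>r. \<forall>x\<in>T. r!x = ?g x) xs)"
    by (metis length_filter_le)
  moreover have "length (filter (\<lambda>r. \<forall>x\<in>T. r!x = ?g x) xs) = 1" using assms(1) g by blast
  ultimately show ?thesis by linarith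
qed

lemma inj_mod:
  assumes "t \<le> (k::nat)"
  shows "inj_on (\<lambda>c. c mod k) {i..<i+t}"
proof (rule inj_onI)
  fix a b assume a: "a \<in> {i..<i+t}" and b: "b \<in> {i..<i+t}" and e: "a mod k = b mod k"
  show "a = b"
  proof (rule ccontr)
    assume "a \<noteq> b"
    then consider "a < b" | "b < a" by linarith
    then show False
    proof cases
      case 1
      then have "k dvd b - a" using e mod_eq_dvd_iff_nat[of a b k] by simp
      moreover have "0 < b - a" "b - a < k" using 1 a b assms by auto
      ultimately show False by (meson nat_dvd_not_less)
    next
      case 2
      then have "k dvd a - b" using e mod_eq_dvd_iff_nat[of b a k] by simp
      moreover have "0 < a - b" "a - b < k" using 2 a b assms by auto
      ultimately show False by (meson nat_dvd_not_less)
    qed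
  qed
qed

lemma card_union:
  fixes i j k t :: nat
  assumes "i < j" "j < k" "t + 1 \<le> k" "t \<ge> 1"
  shows "t + 1 \<le> card ((\<lambda>c. c mod k) ` ({i..<i+t} \<union> {j..<j+t}))"
proof -
  let ?p = "\<lambda>c::nat. c mod k"
  have ci: "card (?p ` {i..<i+t}) = t" using inj_mod[of t k i] assms card_image by fastforce
  have cj: "card (?p ` {j..<j+t}) = t" using inj_mod[of t k j] assms card_image by fastforce
  have fin: "finite (?p ` ({i..<i+t} \<union> {j..<j+t}))" by simp
  have eq: "?p ` ({i..<i+t} \<union> {j..<j+t}) = ?p ` {i..<i+t} \<union> ?p ` {j..<j+t}" by auto
  show ?thesis
  proof (cases "i + t \<le> j")
    case True
    have "j \<in> ?p ` {j..<j+t}" using assms by (auto intro!: image_eqI[of j _ j])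
    moreover have "j \<notin> ?p ` {i..<i+t}"
    proof
      assume "j \<in> ?p ` {i..<i+t}"
      then obtain c where c: "c \<in> {i..<i+t}" "j = c mod k" by auto
      have h1: "c mod k \<le> c" by simp
      have h2: "c < i + t" using c(1) by simp
      from h1 h2 c(2) True show False by linarith
    qed
    ultimately have "?p ` {i..<i+t} \<subset> ?p ` ({i..<i+t} \<union> {j..<j+t})" using eq by blast
    then show ?thesis using psubset_card_mono[OF fin] ci by (metis Suc_eq_plus1 Suc_leI)
  next
    case False
    have "j - 1 \<in> {i..<i+t}" "(j - 1) mod k = j - 1" using assms False by auto
    then have "j - 1 \<in> ?p ` {i..<i+t}" by (metis image_eqI)
    moreover have "j - 1 \<notin> ?p ` {j..<j+t}"
    proof
      assume "j - 1 \<in> ?p ` {j..<j+t}"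
      then obtain c where c: "c \<in> {j..<j+t}" "j - 1 = c mod k" by auto
      show False
      proof (cases "c < k")
        case True
        then have "c mod k = c" by simp
        then show False using c assms(1) by auto
      next
        case False
        then have "c - k < k" using c assms by auto
        then have "c mod k = c - k" using False by (simp add: mod_if)
        then show False using c assms by auto
      qed
    qed
    ultimately have "?p ` {j..<j+t} \<subset> ?p ` ({i..<i+t} \<union> {j..<j+t})" using eq by blast
    then show ?thesis using psubset_card_mono[OF fin] cj by (metis Suc_eq_plus1 Suc_leI)
  qed
qed

theorem mainTheorem6:
  fixes t k v :: nat
  assumes "t \<ge> 1" and "k \<ge> t + 1" and "v \<ge> 2"
    and "\<exists>A. is_OA 1 (t + 1) (k + 1) {..<v} A"
  shows "\<forall>lam. 0 < lam \<and> lam \<le> v \<longrightarrow>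
           (\<exists>B. is_simple_COA lam t (k + t - 1) {..<v} B)"
proof (intro allI impI)
  fix lam :: nat assume lam: "0 < lam \<and> lam \<le> v"
  from assms(4) obtain A where A: "is_OA 1 (t + 1) (k + 1) {..<v} A" by blast
  define K where "K = k + t - 1"
  define B where "B = map (\<lambda>r. map (\<lambda>c. r ! (c mod k)) [0..<K]) (filter (\<lambda>r. r!k < lam) A)"
  let ?p = "\<lambda>c::nat. c mod k"
  have kpos: "0 < k" using assms by simp
  have Alen: "\<forall>r\<in>set A. length r = k+1 \<and> set r \<subseteq> {..<v}"
    using A unfolding is_OA_def array_on_def by blast
  have Acnt: "\<And>C g. C \<subseteq> {..<k+1} \<Longrightarrow> card C = t+1 \<Longrightarrow> g \<in> C \<rightarrow>\<^sub>E {..<v} \<Longrightarrow> tuple_count A C g = 1"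
    using A unfolding is_OA_def by auto
  have tcB: "tuple_count B C f = length (filter (\<lambda>r. r!k < lam \<and> (\<forall>c\<in>C. r!(c mod k) = f c)) A)"
    if "C \<subseteq> {..<K}" for C f
  proof -
    have nth: "\<And>x c. c \<in> C \<Longrightarrow> map (\<lambda>c. x ! (c mod k)) [0..<K] ! c = x ! (c mod k)"
      using that by auto
    have eq: "\<And>x. (\<forall>c\<in>C. map (\<lambda>c. x ! (c mod k)) [0..<K] ! c = f c) \<longleftrightarrow> (\<forall>c\<in>C. x ! (c mod k) = f c)"
      by (rule ball_cong[OF refl]) (metis nth)
    have "tuple_count B C f = length (filter (\<lambda>x. x!k < lam \<and> (\<forall>c\<in>C. map (\<lambda>c. x ! (c mod k)) [0..<K] ! c = f c)) A)"
      unfolding B_def tuple_count_def filter_map length_map o_def filter_filter ..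
    also have "\<dots> = length (filter (\<lambda>r. r!k < lam \<and> (\<forall>c\<in>C. r!(c mod k) = f c)) A)"
      using eq by presburger
    finally show ?thesis .
  qed
  have win: "tuple_count B (window t i) f = lam" if i: "i + t \<le> K" and f: "f \<in> window t i \<rightarrow>\<^sub>E {..<v}" for i f
  proof -
    let ?W = "{i..<i+t}"
    let ?Q = "\<lambda>r. \<forall>c\<in>?W. r!(c mod k) = f c"
    have W: "window t i = ?W" by (simp add: window_def)
    have inj: "inj_on ?p ?W" using inj_mod assms by simp
    have one: "length (filter (\<lambda>r. r!k = s \<and> ?Q r) A) = 1" if s: "s < lam" for s
    proof -
      define T where "T = insert k (?p ` ?W)"
      define g where "g = restrict (\<lambda>x. if x = k then s else f (inv_into ?W ?p x)) T"
      have kn: "k \<notin> ?p ` ?W" using kpos by (metis image_iff mod_less_divisor order.irrefl)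
      have cT: "card T = t + 1" unfolding T_def using kn card_image[OF inj] by simp
      have sT: "T \<subseteq> {..<k+1}" unfolding T_def using kpos by (auto intro!: less_SucI)
      have gT: "g \<in> T \<rightarrow>\<^sub>E {..<v}"
      proof -
        have "f (inv_into ?W ?p x) \<in> {..<v}" if "x \<in> ?p ` ?W" for x
          using f W inv_into_into[OF that] by (metis PiE_mem)
        then show ?thesis using s lam unfolding g_def T_def by auto
      qed
      have "filter (\<lambda>r. r!k = s \<and> ?Q r) A = filter (\<lambda>r. \<forall>x\<in>T. r!x = g x) A"
      proof (rule filter_cong)
        fix r
        have "(\<forall>x\<in>?p ` ?W. r!x = g x) \<longleftrightarrow> ?Q r"
        proof -
          have mne: "\<And>x. x mod k \<noteq> k" using kpos by (metis mod_less_divisor less_irrefl_nat)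
          show ?thesis using kn inv_into_f_f[OF inj] unfolding g_def T_def by (auto simp: mne)
        qed
        moreover have "g k = s" unfolding g_def T_def by simp
        ultimately show "(r!k = s \<and> ?Q r) = (\<forall>x\<in>T. r!x = g x)" unfolding T_def by auto
      qed simp
      then show ?thesis using Acnt[OF sT cT gT] by (simp add: tuple_count_def)
    qed
    have "?W \<subseteq> {..<K}" using i by auto
    then have "tuple_count B (window t i) f = length (filter (\<lambda>r. r!k < lam \<and> ?Q r) A)"
      using tcB W by simp
    also have "\<dots> = (\<Sum>s<lam. length (filter (\<lambda>r. r!k = s \<and> ?Q r) A))"
      by (rule split_sum)
    also have "\<dots> = (\<Sum>s<lam. 1)" using one by simp
    finally show ?thesis by simp
  qed
  have simp_lt: "tuple_count B (window t i \<union> window t j) f \<le> 1"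
    if ij: "i < j" "j + t \<le> K" for i j f
  proof -
    let ?U = "{i..<i+t} \<union> {j..<j+t}"
    let ?Q = "\<lambda>r. \<forall>c\<in>?U. r!(c mod k) = f c"
    have U: "window t i \<union> window t j = ?U" by (simp add: window_def)
    have "?U \<subseteq> {..<K}" using ij by auto
    then have "tuple_count B (window t i \<union> window t j) f = length (filter (\<lambda>r. r!k < lam \<and> ?Q r) A)"
      using tcB U by simp
    also have "\<dots> = length (filter (\<lambda>r. r!k < lam) (filter ?Q A))" by (simp add: conj_commute)
    also have "\<dots> \<le> length (filter ?Q A)" by (rule length_filter_le)
    also have "\<dots> \<le> 1"
    proof -
      have "j < k" using ij assms unfolding K_def by linarith
      then have "t + 1 \<le> card (?p ` ?U)" using card_union[of i j k t] ij assms by simp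
      then obtain T where T: "T \<subseteq> ?p ` ?U" "card T = t + 1" by (meson obtain_subset_with_card_n)
      have sT: "T \<subseteq> {..<k+1}" using T(1) kpos by (auto intro!: less_SucI)
      show ?thesis
      proof (rule le1[where T=T and V="{..<v}"])
        show "\<forall>g\<in>T \<rightarrow>\<^sub>E {..<v}. length (filter (\<lambda>r. \<forall>x\<in>T. r!x = g x) A) = 1"
          using Acnt[OF sT T(2)] by (simp add: tuple_count_def)
        show "\<forall>r\<in>set A. \<forall>x\<in>T. r!x \<in> {..<v}"
        proof (intro ballI)
          fix r x assume r: "r \<in> set A" and x: "x \<in> T"
          have "x < length r" using r x sT Alen by auto
          then show "r!x \<in> {..<v}" using Alen r nth_mem by blast
        qed
        show "\<forall>x\<in>T. r1!x = r2!x" if "?Q r1" "?Q r2" for r1 r2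
          using that T(1) by fastforce
      qed
    qed
    finally show ?thesis .
  qed
  have rows: "\<forall>r\<in>set B. length r = K \<and> set r \<subseteq> {..<v}"
  proof
    fix r assume "r \<in> set B"
    then obtain a where a: "a \<in> set A" "r = map (\<lambda>c. a ! (c mod k)) [0..<K]" unfolding B_def by auto
    have "a ! (c mod k) \<in> {..<v}" for c
    proof -
      have "c mod k < length a" using a Alen kpos by (simp add: less_SucI)
      then show ?thesis using Alen a nth_mem by blast
    qed
    then show "length r = K \<and> set r \<subseteq> {..<v}" using a by auto
  qed
  have tK: "t \<le> K" using assms unfolding K_def by simp
  have lenB: "length B = lam * v ^ t"
  proof -
    have "length B = (\<Sum>f\<in>window t 0 \<rightarrow>\<^sub>E {..<v}. tuple_count B (window t 0) f)"
      by (rule part_count) (use rows tK in \<open>auto simp: window_def\<close>)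
    also have "\<dots> = (\<Sum>f\<in>window t 0 \<rightarrow>\<^sub>E {..<v}. lam)"
      using win tK by (intro sum.cong) auto
    also have "\<dots> = lam * v ^ t" by (simp add: card_PiE window_def)
    finally show ?thesis .
  qed
  show "\<exists>B. is_simple_COA lam t (k + t - 1) {..<v} B"
  proof (intro exI)
    show "is_simple_COA lam t (k + t - 1) {..<v} B"
      unfolding is_simple_COA_def is_COA_def array_on_def K_def[symmetric]
    proof (intro conjI allI impI)
      show "finite {..<v}" by simp
      show "length B = lam * card {..<v} ^ t" using lenB by simp
      show "\<forall>r\<in>set B. length r = K \<and> set r \<subseteq> {..<v}" by (rule rows)
      show "\<forall>f\<in>window t i \<rightarrow>\<^sub>E {..<v}. tuple_count B (window t i) f = lam" if "i + t \<le> K" for i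
        using win that by blast
      fix i j
      assume h: "i + t \<le> K \<and> j + t \<le> K \<and> window t i \<noteq> window t j \<and>
          card (window t i \<inter> window t j) \<le> t - 1"
      then have "i \<noteq> j" by auto
      then consider "i < j" | "j < i" by linarith
      then show "\<forall>f\<in>window t i \<union> window t j \<rightarrow>\<^sub>E {..<v}. tuple_count B (window t i \<union> window t j) f \<le> 1"
      proof cases
        case 1 then show ?thesis using simp_lt h by blast
      next
        case 2 then show ?thesis using simp_lt[of j i] h by (simp add: Un_commute)
      qed
    qed
  qed
qed

end
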